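(* Let \(G=(V,E)\) be a connected graph with spanning tree \(T\). Let \(G_i\) be an induced subgraph of \(G\) such that the restriction \(T_i\) of \(T\) to \(V(G_i)\) is a spanning tree of \(G_i\). If \(T\) is the \(\mathcal{L}\)-tree of an LDFS ordering of \(G\), then \(T_i\) is the \(\mathcal{L}\)-tree of an LDFS ordering of \(G_i\). In particular, if \(T\) is the \(\mathcal{L}\)-tree of an LDFS ordering of \(G\) starting at \(r\in V\) and \(r\in V(G_i)\), then \(T_i\) is the \(\mathcal{L}\)-tree of an LDFS ordering of \(G_i\) starting at \(r\).
   Context: An LDFS ordering of a connected graph is any vertex ordering \((v_1,\dots,v_n)\) produced as follows for some start vertex \(s\) (then \(v_1=s\)) and some tie-breaking: give \(s\) the label \((0)\) and every other vertex the empty label; for \(i=1,\dots,n\), pick an unnumbered vertex with lexicographically largest label, set it as \(v_i\), and prepend \(i\) to the label of every unnumbered neighbor of it. The \(\mathcal{L}\)-tree of an ordering \((v_1,\dots,v_n)\) is the tree containing, for each \(i\ge2\), the edge from \(v_i\) to its rightmost neighbor \(v_j\) with \(j<i\). The restriction of \(T\) to a vertex set \(S\) is the subgraph of \(T\) induced by \(S\). *)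

theory Defs
  imports Main
begin

definition graph :: "'a set \<Rightarrow> 'a set set \<Rightarrow> bool" where
  "graph V E \<longleftrightarrow> finite V \<and> (\<forall>e\<in>E. \<exists>u v. u \<noteq> v \<and> e = {u, v} \<and> u \<in> V \<and> v \<in> V)"

definition adj :: "'a set set \<Rightarrow> 'a \<Rightarrow> 'a \<Rightarrow> bool" where
  "adj E u v \<longleftrightarrow> {u, v} \<in> E"

definition connected_graph :: "'a set \<Rightarrow> 'a set set \<Rightarrow> bool" where
  "connected_graph V E \<longleftrightarrow> graph V E \<and> V \<noteq> {} \<and>
     (\<forall>u\<in>V. \<forall>v\<in>V. (u, v) \<in> {(x, y). adj E x y}\<^sup>*)"

definition acyclic_graph :: "'a set \<Rightarrow> 'a set set \<Rightarrow> bool" where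
  "acyclic_graph V E \<longleftrightarrow> \<not> (\<exists>cs. length cs \<ge> 3 \<and> distinct cs \<and> set cs \<subseteq> V \<and>
      (\<forall>i<length cs. {cs ! i, cs ! ((i + 1) mod length cs)} \<in> E))"

definition is_tree :: "'a set \<Rightarrow> 'a set set \<Rightarrow> bool" where
  "is_tree V T \<longleftrightarrow> connected_graph V T \<and> acyclic_graph V T"

definition spanning_tree :: "'a set \<Rightarrow> 'a set set \<Rightarrow> 'a set set \<Rightarrow> bool" where
  "spanning_tree V E T \<longleftrightarrow> T \<subseteq> E \<and> is_tree V T"

text \<open>Edge set of the subgraph induced by S (also used for the restriction of a tree to S).\<close>
definition induced :: "'a set set \<Rightarrow> 'a set \<Rightarrow> 'a set set" where
  "induced E S = {e \<in> E. e \<subseteq> S}"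

text \<open>Label of vertex w just before step i (1-based) of the LDFS process for the ordering vs
  (v_j = vs ! (j-1)): the numbers j < i of earlier numbered neighbours, most recent first,
  followed by the initial entry 0 if w is the start vertex s.\<close>
definition ldfs_label :: "'a set set \<Rightarrow> 'a \<Rightarrow> 'a list \<Rightarrow> nat \<Rightarrow> 'a \<Rightarrow> nat list" where
  "ldfs_label E s vs i w =
     rev (filter (\<lambda>j. adj E (vs ! (j - 1)) w) [1..<i]) @ (if w = s then [0] else [])"

definition lex_less :: "nat list \<Rightarrow> nat list \<Rightarrow> bool" where
  "lex_less xs ys \<longleftrightarrow> (xs, ys) \<in> lexord {(a, b). a < b}"

definition ldfs_ordering :: "'a set \<Rightarrow> 'a set set \<Rightarrow> 'a \<Rightarrow> 'a list \<Rightarrow> bool" where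
  "ldfs_ordering V E s vs \<longleftrightarrow> s \<in> V \<and> distinct vs \<and> set vs = V \<and> vs \<noteq> [] \<and> hd vs = s \<and>
     (\<forall>i\<in>{1..length vs}. \<forall>w\<in>V - set (take (i - 1) vs).
         \<not> lex_less (ldfs_label E s vs i (vs ! (i - 1))) (ldfs_label E s vs i w))"

text \<open>The L-tree: for each position i \<ge> 2 (0-based i > 0), the edge to the rightmost earlier neighbour.\<close>
definition L_tree :: "'a set set \<Rightarrow> 'a list \<Rightarrow> 'a set set" where
  "L_tree E vs = {{vs ! i, vs ! j} | i j. 0 < i \<and> i < length vs \<and> j < i \<and> adj E (vs ! j) (vs ! i) \<and>
       (\<forall>k. j < k \<and> k < i \<longrightarrow> \<not> adj E (vs ! k) (vs ! i))}"

end

theory Submission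
  imports Defs
begin

lemma lex_filter:
  fixes L :: "nat list"
  assumes "sorted_wrt (>) L"
  shows "(filter P L, filter Q L) \<in> lexord {(a, b). a < b} \<longleftrightarrow>
         (\<exists>x\<in>set L. \<not> P x \<and> Q x \<and> (\<forall>y\<in>set L. y > x \<longrightarrow> P y = Q y))"
  using assms
proof (induction L)
  case Nil
  then show ?case by simp
next
  case (Cons x L)
  have lt: "\<forall>y\<in>set L. y < x" using Cons.prems by simp
  have IH: "(filter P L, filter Q L) \<in> lexord {(a, b). a < b} \<longleftrightarrow>
         (\<exists>x\<in>set L. \<not> P x \<and> Q x \<and> (\<forall>y\<in>set L. y > x \<longrightarrow> P y = Q y))"
    using Cons by simp
  have fq: "\<forall>y\<in>set (filter Q L). y < x" "\<forall>y\<in>set (filter P L). y < x" using lt by auto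
  show ?case
  proof (cases "P x"; cases "Q x")
    assume "P x" "Q x" then show ?thesis using IH lt by auto
  next
    assume "\<not> P x" "\<not> Q x" then show ?thesis using IH lt by auto
  next
    assume a: "P x" "\<not> Q x"
    have "(x # filter P L, filter Q L) \<notin> lexord {(a, b). a < b}"
      using fq(1) by (cases "filter Q L") auto
    then show ?thesis using a lt by auto
  next
    assume a: "\<not> P x" "Q x"
    have "(filter P L, x # filter Q L) \<in> lexord {(a, b). a < b}"
      using fq(2) by (cases "filter P L") auto
    then show ?thesis using a lt by auto
  qed
qed

definition prec :: "'a list \<Rightarrow> 'a \<Rightarrow> 'a \<Rightarrow> bool" where
  "prec xs x y \<longleftrightarrow> (\<exists>i j. i < j \<and> j < length xs \<and> xs ! i = x \<and> xs ! j = y)"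

lemma prec_Nil[simp]: "\<not> prec [] x y" by (simp add: prec_def)

lemma prec_Cons: "prec (z # xs) x y \<longleftrightarrow> (x = z \<and> y \<in> set xs) \<or> prec xs x y"
proof
  assume "prec (z # xs) x y"
  then obtain i j where h: "i < j" "j < length (z # xs)" "(z#xs) ! i = x" "(z#xs) ! j = y"
    unfolding prec_def by blast
  show "(x = z \<and> y \<in> set xs) \<or> prec xs x y"
  proof (cases i)
    case 0
    then show ?thesis using h by (cases j) auto
  next
    case (Suc i')
    then obtain j' where "j = Suc j'" using h by (cases j) auto
    then show ?thesis using h Suc unfolding prec_def by auto
  qed
next
  assume "(x = z \<and> y \<in> set xs) \<or> prec xs x y"
  then show "prec (z # xs) x y"
  proof
    assume "x = z \<and> y \<in> set xs"
    then obtain j where "j < length xs" "xs ! j = y" by (auto simp: in_set_conv_nth)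
    then show ?thesis using \<open>x = z \<and> y \<in> set xs\<close> unfolding prec_def
      by (intro exI[of _ 0] exI[of _ "Suc j"]) auto
  next
    assume "prec xs x y"
    then obtain i j where h: "i < j" "j < length xs" "xs ! i = x" "xs ! j = y"
      unfolding prec_def by blast
    then show ?thesis unfolding prec_def
      by (intro exI[of _ "Suc i"] exI[of _ "Suc j"]) auto
  qed
qed

lemma prec_set: "prec xs x y \<Longrightarrow> x \<in> set xs \<and> y \<in> set xs"
  unfolding prec_def by auto

lemma prec_filter: "prec (filter Q xs) x y \<longleftrightarrow> Q x \<and> Q y \<and> prec xs x y"
proof (induction xs)
  case Nil then show ?case by simp
next
  case (Cons z xs)
  then show ?case using prec_set[of xs x y] by (auto simp: prec_Cons)
qed

lemma prec_nth: assumes "distinct xs" "i < length xs" "j < length xs"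
  shows "prec xs (xs ! i) (xs ! j) \<longleftrightarrow> i < j"
proof
  assume "prec xs (xs ! i) (xs ! j)"
  note d = assms this
  then obtain a b where "a < b" "b < length xs" "xs ! a = xs ! i" "xs ! b = xs ! j"
    unfolding prec_def by blast
  then show "i < j" using d nth_eq_iff_index_eq[of xs a i] nth_eq_iff_index_eq[of xs b j] by auto
next
  assume "i < j"
  then show "prec xs (xs ! i) (xs ! j)" using assms unfolding prec_def by blast
qed

lemma reach_cross:
  assumes "(u, v) \<in> {(x, y). adj F x y}\<^sup>*" "u \<in> D" "v \<notin> D"
  shows "\<exists>x z. x \<in> D \<and> z \<notin> D \<and> adj F x z"
proof -
  have "u \<in> D \<Longrightarrow> v \<in> D \<or> (\<exists>x z. x \<in> D \<and> z \<notin> D \<and> adj F x z)"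
    using assms(1) by (induction rule: rtrancl_induct) auto
  then show ?thesis using assms by blast
qed

lemma adj_induced: "adj (induced E S) x y \<longleftrightarrow> adj E x y \<and> x \<in> S \<and> y \<in> S"
  unfolding adj_def induced_def by auto

lemma adj_sym: "adj E x y = adj E y x"
  unfolding adj_def by (simp add: insert_commute)

lemma label_eq:
  "w \<noteq> s \<Longrightarrow> ldfs_label E s vs i w = filter (\<lambda>j. adj E (vs ! (j - 1)) w) (rev [1..<i])"
  unfolding ldfs_label_def by (simp add: rev_filter)

lemma sorted_rev_upt: "sorted_wrt (>) (rev [1..<i])"
  by (simp add: sorted_wrt_rev)

lemma nth_notin_take:
  assumes "distinct vs" "c < length vs" "b \<le> c"
  shows "vs ! c \<notin> set (take b vs)"
proof
  assume "vs ! c \<in> set (take b vs)"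
  then obtain k where k: "k < length (take b vs)" "take b vs ! k = vs ! c"
    by (auto simp: in_set_conv_nth)
  then have "k < b" "vs ! k = vs ! c" by auto
  then show False using assms k nth_eq_iff_index_eq[of vs k c] by auto
qed

lemma ldfs_basic:
  assumes "ldfs_ordering V E s vs"
  shows "distinct vs" "set vs = V" "vs \<noteq> []" "s = vs ! 0"
    "\<And>i. 0 < i \<Longrightarrow> i < length vs \<Longrightarrow> vs ! i \<noteq> s"
  using assms unfolding ldfs_ordering_def
  by (auto simp: hd_conv_nth nth_eq_iff_index_eq)

lemma ldfs_step:
  assumes "ldfs_ordering V E s vs" "b \<le> c" "c < length vs"
  shows "\<not> lex_less (ldfs_label E s vs (Suc b) (vs ! b)) (ldfs_label E s vs (Suc b) (vs ! c))"
proof -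
  have "vs ! c \<in> V - set (take b vs)"
    using nth_notin_take[of vs c b] assms ldfs_basic[OF assms(1)] by auto
  moreover have "Suc b \<in> {1..length vs}" using assms by auto
  ultimately show ?thesis using assms(1) unfolding ldfs_ordering_def by fastforce
qed

lemma ldfs_4pt:
  assumes ld: "ldfs_ordering V E s vs" and abc: "a < b" "b < c" "c < length vs"
    and ac: "adj E (vs!a) (vs!c)" and nab: "\<not> adj E (vs!a) (vs!b)"
  shows "\<exists>d. a < d \<and> d < b \<and> adj E (vs!d) (vs!b) \<and> \<not> adj E (vs!d) (vs!c)"
proof (rule ccontr)
  assume H: "\<not> ?thesis"
  define Pb where "Pb = (\<lambda>j. adj E (vs ! (j - 1)) (vs ! b))"
  define Pc where "Pc = (\<lambda>j. adj E (vs ! (j - 1)) (vs ! c))"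
  define L where "L = rev [1..<Suc b]"
  have nb: "vs ! b \<noteq> s" "vs ! c \<noteq> s" using ldfs_basic(5)[OF ld] abc by auto
  have "\<not> lex_less (ldfs_label E s vs (Suc b) (vs ! b)) (ldfs_label E s vs (Suc b) (vs ! c))"
    using ldfs_step[OF ld] abc by simp
  then have "\<not> (filter Pb L, filter Pc L) \<in> lexord {(a, b). a < b}"
    unfolding lex_less_def label_eq[OF nb(1)] label_eq[OF nb(2)] Pb_def Pc_def L_def .
  then have N: "\<not> (\<exists>x\<in>set L. \<not> Pb x \<and> Pc x \<and> (\<forall>y\<in>set L. y > x \<longrightarrow> Pb y = Pc y))"
    using lex_filter[OF sorted_rev_upt[of "Suc b"]] unfolding L_def by blast
  define M where "M = {j \<in> {Suc a..b}. Pb j \<noteq> Pc j}"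
  have fin: "finite M" unfolding M_def by auto
  have aM: "Suc a \<in> M" unfolding M_def Pb_def Pc_def using abc ac nab by auto
  define x where "x = Max M"
  have xM: "x \<in> M" unfolding x_def using fin aM Max_in by blast
  have xmax: "\<And>y. y \<in> M \<Longrightarrow> y \<le> x" unfolding x_def using fin by simp
  have "\<not> (Pb x \<and> \<not> Pc x)"
  proof
    assume p: "Pb x \<and> \<not> Pc x"
    then have "x \<noteq> Suc a" unfolding Pb_def using nab by auto
    then have "a < x - 1" "x - 1 < b" using xM unfolding M_def by auto
    then show False using H p unfolding Pb_def Pc_def by blast
  qed
  then have "\<not> Pb x \<and> Pc x" using xM unfolding M_def by auto
  moreover have "x \<in> set L" using xM unfolding M_def L_def by auto
  moreover have "\<forall>y\<in>set L. y > x \<longrightarrow> Pb y = Pc y"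
  proof (intro ballI impI)
    fix y assume "y \<in> set L" "y > x"
    then have "y \<in> {Suc a..b}" using xM unfolding L_def M_def by auto
    then show "Pb y = Pc y" using xmax[of y] \<open>y > x\<close> unfolding M_def by force
  qed
  ultimately show False using N by blast
qed

lemma fourpt_ldfs:
  assumes d: "distinct vs" "set vs = V" "vs \<noteq> []" "hd vs = s"
    and F: "\<And>a b c. a < b \<Longrightarrow> b < c \<Longrightarrow> c < length vs \<Longrightarrow> adj E (vs!a) (vs!c) \<Longrightarrow>
       \<not> adj E (vs!a) (vs!b) \<Longrightarrow> \<exists>d. a < d \<and> d < b \<and> adj E (vs!d) (vs!b) \<and> \<not> adj E (vs!d) (vs!c)"
  shows "ldfs_ordering V E s vs"
proof -
  have s0: "s = vs ! 0" using d by (simp add: hd_conv_nth)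
  have ns: "\<And>i. 0 < i \<Longrightarrow> i < length vs \<Longrightarrow> vs ! i \<noteq> s"
    using d s0 nth_eq_iff_index_eq by fastforce
  have main: "\<not> lex_less (ldfs_label E s vs (Suc b) (vs ! b)) (ldfs_label E s vs (Suc b) (vs ! c))"
    if bc: "b \<le> c" "c < length vs" for b c
  proof (cases "b = c")
    case True
    then show ?thesis unfolding lex_less_def by (simp add: lexord_irreflexive)
  next
    case False
    then have bc': "b < c" using bc by simp
    show ?thesis
    proof (cases "b = 0")
      case True
      then show ?thesis using ns[of c] bc' bc s0 unfolding lex_less_def ldfs_label_def by simp
    next
      case False
      have nb: "vs ! b \<noteq> s" "vs ! c \<noteq> s" using ns False bc bc' by auto
      define Pb where "Pb = (\<lambda>j. adj E (vs ! (j - 1)) (vs ! b))"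
      define Pc where "Pc = (\<lambda>j. adj E (vs ! (j - 1)) (vs ! c))"
      define L where "L = rev [1..<Suc b]"
      show ?thesis
      proof
        assume "lex_less (ldfs_label E s vs (Suc b) (vs ! b)) (ldfs_label E s vs (Suc b) (vs ! c))"
        then have "(filter Pb L, filter Pc L) \<in> lexord {(a, b). a < b}"
          unfolding lex_less_def label_eq[OF nb(1)] label_eq[OF nb(2)] Pb_def Pc_def L_def .
        then obtain x where x: "x \<in> set L" "\<not> Pb x" "Pc x" "\<forall>y\<in>set L. y > x \<longrightarrow> Pb y = Pc y"
          using lex_filter[OF sorted_rev_upt[of "Suc b"]] unfolding L_def by blast
        have xr: "1 \<le> x" "x \<le> b" using x(1) unfolding L_def by auto
        then have "x - 1 < b" by simp
        then obtain d where dd: "x - 1 < d" "d < b" "adj E (vs!d) (vs!b)" "\<not> adj E (vs!d) (vs!c)"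
          using F[of "x - 1" b c] x(2,3) bc bc' unfolding Pb_def Pc_def by blast
        have "Suc d \<in> set L" "Suc d > x" using dd xr unfolding L_def by auto
        then have "Pb (Suc d) = Pc (Suc d)" using x(4) by blast
        then show False using dd unfolding Pb_def Pc_def by simp
      qed
    qed
  qed
  show ?thesis unfolding ldfs_ordering_def
  proof (intro conjI ballI)
    show "s \<in> V" using d s0 by auto
    fix i w assume i: "i \<in> {1..length vs}" and w: "w \<in> V - set (take (i - 1) vs)"
    then obtain c where c: "c < length vs" "vs ! c = w" using d by (auto simp: in_set_conv_nth)
    have "i - 1 \<le> c"
    proof (rule ccontr)
      assume "\<not> i - 1 \<le> c"
      then have "vs ! c \<in> set (take (i - 1) vs)" using c i by (auto simp: in_set_conv_nth intro!: exI[of _ c])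
      then show False using w c by simp
    qed
    then show "\<not> lex_less (ldfs_label E s vs i (vs ! (i - 1))) (ldfs_label E s vs i w)"
      using main[of "i - 1" c] c i by (simp add: Suc_diff_1)
  qed (use d in auto)
qed


locale LD =
  fixes V :: "'a set" and E :: "'a set set" and s :: 'a and \<sigma> :: "'a list"
  assumes ld: "ldfs_ordering V E s \<sigma>" and conn: "connected_graph V E"
begin

definition par :: "nat \<Rightarrow> nat" where
  "par i = (GREATEST j. j < i \<and> adj E (\<sigma> ! j) (\<sigma> ! i))"

lemma dist: "distinct \<sigma>" and setV: "set \<sigma> = V"
  using ldfs_basic[OF ld] by auto

lemma earlier_nb:
  assumes i: "0 < i" "i < length \<sigma>"
  shows "\<exists>j<i. adj E (\<sigma> ! j) (\<sigma> ! i)"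
proof (rule ccontr)
  assume H: "\<not> ?thesis"
  define D where "D = set (take i \<sigma>)"
  have "\<sigma> ! 0 \<in> D" using i unfolding D_def by (auto simp: in_set_conv_nth intro!: exI[of _ 0])
  moreover have "\<sigma> ! i \<notin> D" using nth_notin_take[OF dist i(2)] unfolding D_def by simp
  moreover have "(\<sigma> ! 0, \<sigma> ! i) \<in> {(x, y). adj E x y}\<^sup>*"
  proof -
    have l: "0 < length \<sigma>" using i by linarith
    have "\<sigma> ! 0 \<in> V" "\<sigma> ! i \<in> V" using setV nth_mem[OF l] nth_mem[OF i(2)] by auto
    then show ?thesis using conn unfolding connected_graph_def by blast
  qed
  ultimately obtain x z where xz: "x \<in> D" "z \<notin> D" "adj E x z"
    using reach_cross[of "\<sigma> ! 0" "\<sigma> ! i" E D] by blast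
  obtain j where j: "j < i" "\<sigma> ! j = x" using xz(1) i unfolding D_def
    by (auto simp: in_set_conv_nth)
  have "z \<in> V"
  proof -
    have "{x, z} \<in> E" using xz(3) unfolding adj_def .
    then obtain u v where "{x, z} = {u, v}" "u \<in> V" "v \<in> V"
      using conn unfolding connected_graph_def graph_def by blast
    then show ?thesis by (auto simp: doubleton_eq_iff)
  qed
  then obtain k where k: "k < length \<sigma>" "\<sigma> ! k = z" using setV by (auto simp: in_set_conv_nth)
  have ik: "i \<le> k"
  proof (rule ccontr)
    assume "\<not> i \<le> k"
    then have "z \<in> D" unfolding D_def using k by (auto simp: in_set_conv_nth intro!: exI[of _ k])
    then show False using xz by simp
  qed
  have nb: "\<sigma> ! i \<noteq> s" "\<sigma> ! k \<noteq> s" using ldfs_basic(5)[OF ld, of i] ldfs_basic(5)[OF ld, of k] i ik k by auto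
  have nl: "\<not> lex_less (ldfs_label E s \<sigma> (Suc i) (\<sigma> ! i)) (ldfs_label E s \<sigma> (Suc i) (\<sigma> ! k))"
    using ldfs_step[OF ld ik k(1)] .
  have e1: "filter (\<lambda>j. adj E (\<sigma> ! (j - 1)) (\<sigma> ! i)) (rev [1..<Suc i]) = []"
    using H by (auto simp: filter_empty_conv)
  have "Suc j \<in> set (rev [1..<Suc i])" unfolding set_rev set_upt atLeastLessThan_iff using j(1) by linarith
  moreover have "adj E (\<sigma> ! (Suc j - 1)) (\<sigma> ! k)" using j xz k by simp
  ultimately have "Suc j \<in> set (filter (\<lambda>j. adj E (\<sigma> ! (j - 1)) (\<sigma> ! k)) (rev [1..<Suc i]))"
    unfolding set_filter by blast
  then have "filter (\<lambda>j. adj E (\<sigma> ! (j - 1)) (\<sigma> ! k)) (rev [1..<Suc i]) \<noteq> []"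
    by (metis empty_iff list.set(1))
  then obtain h t where ht: "filter (\<lambda>j. adj E (\<sigma> ! (j - 1)) (\<sigma> ! k)) (rev [1..<Suc i]) = h # t"
    by (meson neq_Nil_conv)
  have "([], h # t) \<in> lexord {(a, b). (a::nat) < b}" by simp
  then show False using nl unfolding lex_less_def label_eq[OF nb(1)] label_eq[OF nb(2)] e1 ht
    by simp
qed

lemma par:
  assumes "0 < i" "i < length \<sigma>"
  shows "par i < i" "adj E (\<sigma> ! par i) (\<sigma> ! i)"
    "\<And>j. j < i \<Longrightarrow> adj E (\<sigma> ! j) (\<sigma> ! i) \<Longrightarrow> j \<le> par i"
proof -
  obtain j where j: "j < i" "adj E (\<sigma> ! j) (\<sigma> ! i)" using earlier_nb assms by blast
  have b: "\<forall>y. (y < i \<and> adj E (\<sigma> ! y) (\<sigma> ! i)) \<longrightarrow> y \<le> i" by auto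
  have "par i < i \<and> adj E (\<sigma> ! par i) (\<sigma> ! i)"
    unfolding par_def using GreatestI_nat[of "\<lambda>y. y < i \<and> adj E (\<sigma> ! y) (\<sigma> ! i)" j i] j b by blast
  then show "par i < i" "adj E (\<sigma> ! par i) (\<sigma> ! i)" by auto
  fix j' assume "j' < i" "adj E (\<sigma> ! j') (\<sigma> ! i)"
  then show "j' \<le> par i"
    unfolding par_def using Greatest_le_nat[of "\<lambda>y. y < i \<and> adj E (\<sigma> ! y) (\<sigma> ! i)" j' i] b by blast
qed

definition R :: "(nat \<times> nat) set" where
  "R = {(par i, i) | i. 0 < i \<and> i < length \<sigma>}"

lemma R_le: "(a, b) \<in> R\<^sup>* \<Longrightarrow> a \<le> b"
proof (induction rule: rtrancl_induct)
  case base then show ?case by simp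
next
  case (step y z)
  from step(2) obtain i where i: "y = par i" "z = i" "0 < i" "i < length \<sigma>" unfolding R_def by blast
  have "par i < i" using par(1)[OF i(3,4)] .
  then show ?case using step(3) i by linarith
qed

lemma chain:
  "k < length \<sigma> \<Longrightarrow> j \<le> k \<Longrightarrow>
    (j, k) \<in> R\<^sup>* \<or> (\<exists>y. (y, k) \<in> R\<^sup>* \<and> 0 < y \<and> y < length \<sigma> \<and> par y < j \<and> j < y)"
proof (induction k rule: less_induct)
  case (less k)
  show ?case
  proof (cases "j = k")
    case True then show ?thesis by simp
  next
    case False
    then have k0: "0 < k" using less(3) by simp
    have pk: "par k < k" using par(1)[OF k0 less(2)] .
    have Rk: "(par k, k) \<in> R" unfolding R_def using k0 less(2) by blast
    show ?thesis
    proof (cases "j \<le> par k")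
      case True
      have pl: "par k < length \<sigma>" using pk less(2) by simp
      have "(j, par k) \<in> R\<^sup>* \<or> (\<exists>y. (y, par k) \<in> R\<^sup>* \<and> 0 < y \<and> y < length \<sigma> \<and> par y < j \<and> j < y)"
        using less(1)[OF pk pl True] .
      then show ?thesis using Rk rtrancl_into_rtrancl[of _ "par k" R k] by blast
    next
      case False
      have "(k, k) \<in> R\<^sup>*" by simp
      then show ?thesis using k0 less(2,3) False \<open>j \<noteq> k\<close> by (intro disjI2 exI[of _ k]) simp
    qed
  qed
qed

lemma normal:
  assumes ji: "j < i" "i < length \<sigma>" and a: "adj E (\<sigma> ! j) (\<sigma> ! i)"
  shows "(j, i) \<in> R\<^sup>*"
proof -
  have i0: "0 < i" using ji by simp
  have jp: "j \<le> par i" using par(3)[OF i0 ji(2) ji(1) a] .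
  have pi: "par i < i" using par(1)[OF i0 ji(2)] .
  have Ri: "(par i, i) \<in> R" unfolding R_def using i0 ji by blast
  from chain[of "par i" j] pi ji jp
  consider "(j, par i) \<in> R\<^sup>*" | y where "(y, par i) \<in> R\<^sup>*" "0 < y" "y < length \<sigma>" "par y < j" "j < y"
    by fastforce
  then show ?thesis
  proof cases
    case 1 then show ?thesis using Ri rtrancl_into_rtrancl[of j "par i" R i] by blast
  next
    case 2
    have yle: "y \<le> par i" using R_le[OF 2(1)] .
    have nay: "\<not> adj E (\<sigma> ! j) (\<sigma> ! y)"
      using par(3)[OF 2(2,3), of j] 2 by auto
    obtain d where d: "j < d" "d < y" "adj E (\<sigma> ! d) (\<sigma> ! y)"
      using ldfs_4pt[OF ld 2(5) _ ji(2) a nay] yle pi by force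
    then show ?thesis using par(3)[OF 2(2,3), of d] 2 by auto
  qed
qed

lemma T_edge:
  assumes "e \<in> L_tree E \<sigma>"
  shows "\<exists>i. 0 < i \<and> i < length \<sigma> \<and> e = {\<sigma> ! i, \<sigma> ! par i}"
proof -
  obtain i j where h: "e = {\<sigma> ! i, \<sigma> ! j}" "0 < i" "i < length \<sigma>" "j < i"
    "adj E (\<sigma> ! j) (\<sigma> ! i)" "\<forall>k. j < k \<and> k < i \<longrightarrow> \<not> adj E (\<sigma> ! k) (\<sigma> ! i)"
    using assms unfolding L_tree_def by blast
  have "j \<le> par i" using par(3)[OF h(2,3) h(4,5)] .
  moreover have "\<not> j < par i" using h(6) par(1,2)[OF h(2,3)] by blast
  ultimately have "j = par i" by simp
  then show ?thesis using h by blast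
qed

lemma lemC:
  assumes conS: "connected_graph S (induced T S)" and T: "T = L_tree E \<sigma>"
    and idx: "d < length \<sigma>" "u < length \<sigma>" "y < length \<sigma>"
    and inS: "\<sigma> ! u \<in> S" "\<sigma> ! y \<in> S" and yd: "y < d" and du: "(d, u) \<in> R\<^sup>*"
  shows "0 < d \<and> {\<sigma> ! d, \<sigma> ! par d} \<in> induced T S"
proof -
  have path: "(\<sigma> ! u, \<sigma> ! y) \<in> {(x, y). adj (induced T S) x y}\<^sup>*"
    using conS inS unfolding connected_graph_def by blast
  define D where "D = {\<sigma> ! m | m. m < length \<sigma> \<and> (d, m) \<in> R\<^sup>*}"
  have uD: "\<sigma> ! u \<in> D" unfolding D_def using idx du by blast
  have yD: "\<sigma> ! y \<notin> D"
  proof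
    assume "\<sigma> ! y \<in> D"
    then obtain m where m: "m < length \<sigma>" "(d, m) \<in> R\<^sup>*" "\<sigma> ! y = \<sigma> ! m" unfolding D_def by blast
    then have "y = m" using nth_eq_iff_index_eq[OF dist idx(3) m(1)] by simp
    then show False using R_le[OF m(2)] yd by simp
  qed
  obtain x z where xz: "x \<in> D" "z \<notin> D" "adj (induced T S) x z"
    using reach_cross[OF path uD yD] by blast
  have eS: "{x, z} \<in> induced T S" using xz(3) unfolding adj_def .
  then have "{x, z} \<in> L_tree E \<sigma>" using T unfolding induced_def by auto
  then obtain i where i: "0 < i" "i < length \<sigma>" "{x, z} = {\<sigma> ! i, \<sigma> ! par i}"
    using T_edge by blast
  have pi: "par i < i" using par(1)[OF i(1,2)] .
  have Ri: "(par i, i) \<in> R" unfolding R_def using i by blast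
  obtain m where m: "m < length \<sigma>" "(d, m) \<in> R\<^sup>*" "x = \<sigma> ! m" using xz(1) unfolding D_def by blast
  from i(3) consider "x = \<sigma> ! i" "z = \<sigma> ! par i" | "x = \<sigma> ! par i" "z = \<sigma> ! i"
    by (auto simp: doubleton_eq_iff)
  then show ?thesis
  proof cases
    case 1
    then have mi: "m = i" using m nth_eq_iff_index_eq[OF dist m(1) i(2)] by simp
    show ?thesis
    proof (cases "i = d")
      case True
      then show ?thesis using i eS by simp
    next
      case False
      from m(2) have "d = i \<or> (\<exists>w. (d, w) \<in> R\<^sup>* \<and> (w, i) \<in> R)"
        unfolding mi by (blast elim: rtranclE)
      then obtain w where w: "(d, w) \<in> R\<^sup>*" "(w, i) \<in> R" using False by blast
      then have "w = par i" unfolding R_def by auto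
      then have "z \<in> D" unfolding D_def using 1 w pi i by auto
      then show ?thesis using xz by simp
    qed
  next
    case 2
    have "par i < length \<sigma>" using pi i by simp
    then have "m = par i" using 2 m nth_eq_iff_index_eq[OF dist m(1)] by simp
    then have "(d, i) \<in> R\<^sup>*" using m(2) Ri rtrancl_into_rtrancl[of d "par i" R i] by simp
    then have "z \<in> D" unfolding D_def using 2 i by auto
    then show ?thesis using xz by simp
  qed
qed

end


lemma main_aux:
  fixes V S :: "'a set" and E T :: "'a set set" and r :: 'a and \<sigma> :: "'a list"
  assumes conn: "connected_graph V E"
    and SV: "S \<subseteq> V"
    and sp: "spanning_tree S (induced E S) (induced T S)"
    and ld: "ldfs_ordering V E r \<sigma>"
    and T: "T = L_tree E \<sigma>"
  defines "\<tau> \<equiv> filter (\<lambda>x. x \<in> S) \<sigma>"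
  shows "ldfs_ordering S (induced E S) (hd \<tau>) \<tau> \<and> induced T S = L_tree (induced E S) \<tau>"
proof -
  interpret LD V E r \<sigma> using ld conn by unfold_locales
  have conS: "connected_graph S (induced T S)"
    using sp unfolding spanning_tree_def is_tree_def by blast
  have Sne: "S \<noteq> {}" using conS unfolding connected_graph_def by blast
  have dt: "distinct \<tau>" unfolding \<tau>_def using dist by simp
  have st: "set \<tau> = S" unfolding \<tau>_def using setV SV by auto
  have tne: "\<tau> \<noteq> []" using st Sne by auto
  have tS: "\<And>i. i < length \<tau> \<Longrightarrow> \<tau> ! i \<in> S" using st nth_mem by blast
  have iS: "\<And>i. i < length \<sigma> \<Longrightarrow> \<sigma> ! i \<in> S \<Longrightarrow> \<exists>i'<length \<tau>. \<tau> ! i' = \<sigma> ! i"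
  proof -
    fix i assume "i < length \<sigma>" "\<sigma> ! i \<in> S"
    then have "\<sigma> ! i \<in> set \<tau>" using st by simp
    then show "\<exists>i'<length \<tau>. \<tau> ! i' = \<sigma> ! i" unfolding in_set_conv_nth .
  qed
  have iV: "\<And>i'. i' < length \<tau> \<Longrightarrow> \<exists>i<length \<sigma>. \<sigma> ! i = \<tau> ! i'"
  proof -
    fix i' assume "i' < length \<tau>"
    then have "\<tau> ! i' \<in> set \<sigma>" using tS SV setV by blast
    then show "\<exists>i<length \<sigma>. \<sigma> ! i = \<tau> ! i'" unfolding in_set_conv_nth .
  qed
  have TR: "i' < j' \<longleftrightarrow> a < b"
    if "i' < length \<tau>" "j' < length \<tau>" "a < length \<sigma>" "b < length \<sigma>"
       "\<tau> ! i' = \<sigma> ! a" "\<tau> ! j' = \<sigma> ! b" for i' j' a b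
  proof -
    have "i' < j' \<longleftrightarrow> prec \<tau> (\<tau> ! i') (\<tau> ! j')" using prec_nth[OF dt that(1,2)] by simp
    also have "\<dots> \<longleftrightarrow> prec \<sigma> (\<tau> ! i') (\<tau> ! j')"
      unfolding \<tau>_def prec_filter using tS[OF that(1)] tS[OF that(2)] by (simp add: \<tau>_def)
    also have "\<dots> \<longleftrightarrow> a < b" unfolding that(5,6) using prec_nth[OF dist that(3,4)] .
    finally show ?thesis .
  qed
  have ldS: "ldfs_ordering S (induced E S) (hd \<tau>) \<tau>"
  proof (rule fourpt_ldfs[OF dt st tne refl])
    fix a' b' c'
    assume abc: "a' < b'" "b' < c'" "c' < length \<tau>"
      and ac: "adj (induced E S) (\<tau> ! a') (\<tau> ! c')"
      and nab: "\<not> adj (induced E S) (\<tau> ! a') (\<tau> ! b')"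
    have l: "a' < length \<tau>" "b' < length \<tau>" using abc by auto
    obtain a where a: "a < length \<sigma>" "\<sigma> ! a = \<tau> ! a'" using iV l by blast
    obtain b where b: "b < length \<sigma>" "\<sigma> ! b = \<tau> ! b'" using iV l by blast
    obtain c where c: "c < length \<sigma>" "\<sigma> ! c = \<tau> ! c'" using iV abc by blast
    have ab: "a < b" using TR[OF l(1) l(2) a(1) b(1) a(2)[symmetric] b(2)[symmetric]] abc by simp
    have bc: "b < c" using TR[OF l(2) abc(3) b(1) c(1) b(2)[symmetric] c(2)[symmetric]] abc by simp
    have ac': "adj E (\<sigma> ! a) (\<sigma> ! c)" using ac a c by (simp add: adj_induced)
    have nab': "\<not> adj E (\<sigma> ! a) (\<sigma> ! b)" using nab a b tS l by (simp add: adj_induced)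
    obtain d where d: "a < d" "d < b" "adj E (\<sigma> ! d) (\<sigma> ! b)" "\<not> adj E (\<sigma> ! d) (\<sigma> ! c)"
      using ldfs_4pt[OF ld ab bc c(1) ac' nab'] by blast
    have dn: "d < length \<sigma>" using d b by simp
    have "(d, b) \<in> R\<^sup>*" using normal[OF d(2) b(1) d(3)] .
    then have "{\<sigma> ! d, \<sigma> ! par d} \<in> induced T S"
      using lemC[OF conS T dn b(1) a(1) _ _ d(1)] b a tS l by auto
    then have dS: "\<sigma> ! d \<in> S" unfolding induced_def by auto
    obtain d' where d': "d' < length \<tau>" "\<tau> ! d' = \<sigma> ! d" using iS[OF dn dS] by blast
    have "a' < d'" using TR[OF l(1) d'(1) a(1) dn a(2)[symmetric] d'(2)] d by simp
    moreover have "d' < b'" using TR[OF d'(1) l(2) dn b(1) d'(2) b(2)[symmetric]] d by simp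
    moreover have "adj (induced E S) (\<tau> ! d') (\<tau> ! b')" using d d' b dS tS l by (simp add: adj_induced)
    moreover have "\<not> adj (induced E S) (\<tau> ! d') (\<tau> ! c')" using d d' c by (simp add: adj_induced)
    ultimately show "\<exists>d. a' < d \<and> d < b' \<and> adj (induced E S) (\<tau> ! d) (\<tau> ! b') \<and>
        \<not> adj (induced E S) (\<tau> ! d) (\<tau> ! c')" by blast
  qed
  have "induced T S = L_tree (induced E S) \<tau>"
  proof
    show "induced T S \<subseteq> L_tree (induced E S) \<tau>"
    proof
      fix e assume eS: "e \<in> induced T S"
      then have "e \<in> L_tree E \<sigma>" "e \<subseteq> S" using T unfolding induced_def by auto
      then obtain i where i: "0 < i" "i < length \<sigma>" "e = {\<sigma> ! i, \<sigma> ! par i}" using T_edge by blast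
      have pi: "par i < i" "adj E (\<sigma> ! par i) (\<sigma> ! i)" using par(1,2)[OF i(1,2)] by auto
      have pn: "par i < length \<sigma>" using pi i by simp
      have inS: "\<sigma> ! i \<in> S" "\<sigma> ! par i \<in> S" using i \<open>e \<subseteq> S\<close> by auto
      obtain i' where i': "i' < length \<tau>" "\<tau> ! i' = \<sigma> ! i" using iS[OF i(2) inS(1)] by blast
      obtain k' where k': "k' < length \<tau>" "\<tau> ! k' = \<sigma> ! par i" using iS[OF pn inS(2)] by blast
      have ki: "k' < i'" using TR[OF k'(1) i'(1) pn i(2) k'(2) i'(2)] pi by simp
      have nomid: "\<forall>m. k' < m \<and> m < i' \<longrightarrow> \<not> adj (induced E S) (\<tau> ! m) (\<tau> ! i')"
      proof (intro allI impI)
        fix m assume m: "k' < m \<and> m < i'"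
        then have ml: "m < length \<tau>" using i' by simp
        obtain w where w: "w < length \<sigma>" "\<sigma> ! w = \<tau> ! m" using iV[OF ml] by blast
        have "par i < w" using TR[OF k'(1) ml pn w(1) k'(2) w(2)[symmetric]] m by simp
        moreover have "w < i" using TR[OF ml i'(1) w(1) i(2) w(2)[symmetric] i'(2)] m by simp
        ultimately have "\<not> adj E (\<sigma> ! w) (\<sigma> ! i)" using par(3)[OF i(1,2), of w] by auto
        then show "\<not> adj (induced E S) (\<tau> ! m) (\<tau> ! i')" using w i' by (simp add: adj_induced)
      qed
      have adjki: "adj (induced E S) (\<tau> ! k') (\<tau> ! i')" using pi k' i' inS by (simp add: adj_induced)
      have ee: "e = {\<tau> ! i', \<tau> ! k'}" unfolding i(3) i'(2) k'(2) ..
      have i0': "0 < i'" using ki by simp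
      have "\<exists>i j. e = {\<tau> ! i, \<tau> ! j} \<and> 0 < i \<and> i < length \<tau> \<and> j < i \<and>
          adj (induced E S) (\<tau> ! j) (\<tau> ! i) \<and>
          (\<forall>k. j < k \<and> k < i \<longrightarrow> \<not> adj (induced E S) (\<tau> ! k) (\<tau> ! i))"
        using ee i0' i'(1) ki adjki nomid by blast
      then show "e \<in> L_tree (induced E S) \<tau>"
        unfolding L_tree_def by blast
    qed
  next
    show "L_tree (induced E S) \<tau> \<subseteq> induced T S"
    proof
      fix e assume "e \<in> L_tree (induced E S) \<tau>"
      then obtain i' j' where h: "e = {\<tau> ! i', \<tau> ! j'}" "0 < i'" "i' < length \<tau>" "j' < i'"
        "adj (induced E S) (\<tau> ! j') (\<tau> ! i')"
        "\<forall>k. j' < k \<and> k < i' \<longrightarrow> \<not> adj (induced E S) (\<tau> ! k) (\<tau> ! i')"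
        unfolding L_tree_def by blast
      have jl: "j' < length \<tau>" using h by simp
      obtain x where x: "x < length \<sigma>" "\<sigma> ! x = \<tau> ! i'" using iV h by blast
      obtain y where y: "y < length \<sigma>" "\<sigma> ! y = \<tau> ! j'" using iV jl by blast
      have yx: "y < x" using TR[OF jl h(3) y(1) x(1) y(2)[symmetric] x(2)[symmetric]] h by simp
      have x0: "0 < x" using yx by simp
      have adjyx: "adj E (\<sigma> ! y) (\<sigma> ! x)" using h(5) x y by (simp add: adj_induced)
      have ypx: "y \<le> par x" using par(3)[OF x0 x(1) yx adjyx] .
      have px: "par x < x" "adj E (\<sigma> ! par x) (\<sigma> ! x)" using par(1,2)[OF x0 x(1)] by auto
      have pn: "par x < length \<sigma>" using px x by simp
      have eT: "{\<sigma> ! x, \<sigma> ! par x} \<in> induced T S"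
        using lemC[OF conS T x(1) x(1) y(1) _ _ yx] x y tS h jl by auto
      then have pS: "\<sigma> ! par x \<in> S" unfolding induced_def by auto
      have "par x = y"
      proof (rule ccontr)
        assume "par x \<noteq> y"
        then have ylt: "y < par x" using ypx by simp
        obtain k' where k': "k' < length \<tau>" "\<tau> ! k' = \<sigma> ! par x" using iS[OF pn pS] by blast
        have "j' < k'" using TR[OF jl k'(1) y(1) pn y(2)[symmetric] k'(2)] ylt by simp
        moreover have "k' < i'" using TR[OF k'(1) h(3) pn x(1) k'(2) x(2)[symmetric]] px by simp
        moreover have "adj (induced E S) (\<tau> ! k') (\<tau> ! i')"
          using px k' x pS tS h by (simp add: adj_induced)
        ultimately show False using h(6) by blast
      qed
      then show "e \<in> induced T S" using eT h x y by (simp add: insert_commute)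
    qed
  qed
  with ldS show ?thesis by blast
qed

theorem lemma5:
  fixes V S :: "'a set" and E T :: "'a set set" and r :: 'a and \<sigma> :: "'a list"
  assumes "connected_graph V E"
    and "spanning_tree V E T"
    and "S \<subseteq> V"
    and "spanning_tree S (induced E S) (induced T S)"
    and "ldfs_ordering V E r \<sigma>"
    and "T = L_tree E \<sigma>"
  shows "(\<exists>r' \<sigma>'. ldfs_ordering S (induced E S) r' \<sigma>' \<and> induced T S = L_tree (induced E S) \<sigma>')
       \<and> (r \<in> S \<longrightarrow> (\<exists>\<sigma>'. ldfs_ordering S (induced E S) r \<sigma>' \<and> induced T S = L_tree (induced E S) \<sigma>'))"
proof -
  define \<tau> where "\<tau> = filter (\<lambda>x. x \<in> S) \<sigma>"
  have M: "ldfs_ordering S (induced E S) (hd \<tau>) \<tau> \<and> induced T S = L_tree (induced E S) \<tau>"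
    using main_aux[OF assms(1,3,4,5,6)] unfolding \<tau>_def by blast
  have "r \<in> S \<Longrightarrow> hd \<tau> = r"
  proof -
    assume rS: "r \<in> S"
    have "\<sigma> \<noteq> []" "hd \<sigma> = r" using assms(5) unfolding ldfs_ordering_def by auto
    then have "\<sigma> = r # tl \<sigma>" by (metis list.collapse)
    then have "\<tau> = r # filter (\<lambda>x. x \<in> S) (tl \<sigma>)" unfolding \<tau>_def using rS
      by (metis filter.simps(2))
    then show "hd \<tau> = r" by simp
  qed
  then show ?thesis using M by (intro conjI impI exI) auto
qed

end
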